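(* Let $w$ be a decreasing weight on $(0,\infty)$. Then $w\in B_1$ if and only if for every $1<q<\infty$ there exists a weight $w_q$ satisfying $\big(\int_0^r w\big)^q\approx\int_0^r w_q(x)\,dx+r^q\int_r^\infty w_q(x)x^{-q}\,dx$ for all $r>0$ (constants independent of $r$) and such that $\Gamma^{1,q}(w)=\Gamma^q(w_q)$.
   Context: A weight is a nonnegative locally integrable measurable function on $(0,\infty)$; "decreasing" means nonincreasing; $W(t)=\int_0^t w$. For a measurable function $f$ on $\mathbb{R}^n$, $f^*$ is its decreasing rearrangement and $f^{**}(t)=\frac1t\int_0^t f^*(s)\,ds$. $\|f\|_{\Gamma^{1,q}(w)}=\big(\int_0^\infty (f^{**})^qW^{q-1}w\big)^{1/q}$ and $\|f\|_{\Gamma^q(u)}=\big(\int_0^\infty (f^{**})^q u\big)^{1/q}$, each space consisting of the $f$ with finite quantity; $X=Y$ means they coincide with equivalent norms. $w\in B_1$ means there is $C$ with $\int_r^\infty\frac{w(s)}{s}\,ds\le\frac Cr\int_0^r w(s)\,ds$ for all $r>0$. *)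

theory Defs
  imports "HOL-Analysis.Analysis"
begin

definition weight :: "(real \<Rightarrow> real) \<Rightarrow> bool" where
  "weight w \<longleftrightarrow> (\<forall>t>0. 0 \<le> w t) \<and> set_borel_measurable lborel {0<..} w \<and>
     (\<forall>t>0. set_integrable lborel {0<..t} w)"

definition decreasing_weight :: "(real \<Rightarrow> real) \<Rightarrow> bool" where
  "decreasing_weight w \<longleftrightarrow> weight w \<and> (\<forall>s t. 0 < s \<longrightarrow> s \<le> t \<longrightarrow> w t \<le> w s)"

definition Wprim :: "(real \<Rightarrow> real) \<Rightarrow> real \<Rightarrow> real" where
  "Wprim w t = (LINT s:{0<..t}|lborel. w s)"

definition B1 :: "(real \<Rightarrow> real) \<Rightarrow> bool" where
  "B1 w \<longleftrightarrow> (\<exists>C::real. \<forall>r>0.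
      (\<integral>\<^sup>+ s\<in>{r<..}. ennreal (w s / s) \<partial>lborel) \<le> ennreal (C / r * Wprim w r))"

text \<open>Real powers on extended nonnegative reals (used with positive exponents only).\<close>
definition enn_powr :: "ennreal \<Rightarrow> real \<Rightarrow> ennreal" where
  "enn_powr x p = (if x = \<infinity> then \<infinity> else ennreal (enn2real x powr p))"

definition drearr :: "('a::euclidean_space \<Rightarrow> real) \<Rightarrow> real \<Rightarrow> ennreal" where
  "drearr f t = Inf {s::ennreal. emeasure lebesgue {x. s < ennreal \<bar>f x\<bar>} \<le> ennreal t}"

definition dmax :: "('a::euclidean_space \<Rightarrow> real) \<Rightarrow> real \<Rightarrow> ennreal" where
  "dmax f t = ennreal (1 / t) * (\<integral>\<^sup>+ s\<in>{0<..<t}. drearr f s \<partial>lborel)"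

definition Gamma1q_norm :: "(real \<Rightarrow> real) \<Rightarrow> real \<Rightarrow> ('a::euclidean_space \<Rightarrow> real) \<Rightarrow> ennreal" where
  "Gamma1q_norm w q f = enn_powr
     (\<integral>\<^sup>+ t\<in>{0<..}. enn_powr (dmax f t) q * ennreal (Wprim w t powr (q - 1) * w t) \<partial>lborel) (1 / q)"

definition Gammaq_norm :: "(real \<Rightarrow> real) \<Rightarrow> real \<Rightarrow> ('a::euclidean_space \<Rightarrow> real) \<Rightarrow> ennreal" where
  "Gammaq_norm u q f = enn_powr
     (\<integral>\<^sup>+ t\<in>{0<..}. enn_powr (dmax f t) q * ennreal (u t) \<partial>lborel) (1 / q)"

definition Gamma1q :: "(real \<Rightarrow> real) \<Rightarrow> real \<Rightarrow> ('a::euclidean_space \<Rightarrow> real) set" where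
  "Gamma1q w q = {f \<in> borel_measurable lebesgue. Gamma1q_norm w q f < \<infinity>}"

definition Gammaq :: "(real \<Rightarrow> real) \<Rightarrow> real \<Rightarrow> ('a::euclidean_space \<Rightarrow> real) set" where
  "Gammaq u q = {f \<in> borel_measurable lebesgue. Gammaq_norm u q f < \<infinity>}"

definition Gamma_spaces_eq :: "'a::euclidean_space itself \<Rightarrow> (real \<Rightarrow> real) \<Rightarrow> real \<Rightarrow> (real \<Rightarrow> real) \<Rightarrow> bool" where
  "Gamma_spaces_eq _ w q u \<longleftrightarrow>
     (Gamma1q w q :: ('a \<Rightarrow> real) set) = Gammaq u q \<and>
     (\<exists>c C. 0 < c \<and> 0 < C \<and> (\<forall>f \<in> (Gamma1q w q :: ('a \<Rightarrow> real) set).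
        ennreal c * Gammaq_norm u q f \<le> Gamma1q_norm w q f \<and>
        Gamma1q_norm w q f \<le> ennreal C * Gammaq_norm u q f))"

definition level_equiv :: "(real \<Rightarrow> real) \<Rightarrow> real \<Rightarrow> (real \<Rightarrow> real) \<Rightarrow> bool" where
  "level_equiv w q u \<longleftrightarrow> (\<exists>c C. 0 < c \<and> 0 < C \<and> (\<forall>r>0.
     ennreal c * (ennreal (Wprim u r) + ennreal (r powr q) *
        (\<integral>\<^sup>+ x\<in>{r<..}. ennreal (u x * x powr (- q)) \<partial>lborel)) \<le> ennreal (Wprim w r powr q) \<and>
     ennreal (Wprim w r powr q) \<le> ennreal C * (ennreal (Wprim u r) + ennreal (r powr q) *
        (\<integral>\<^sup>+ x\<in>{r<..}. ennreal (u x * x powr (- q)) \<partial>lborel))))"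

end

theory Submission
  imports Defs
begin


lemma weight_meas [measurable]:
  assumes "weight w"
  shows "(\<lambda>x. indicator {0<..} x *\<^sub>R w x) \<in> borel_measurable borel"
  using assms unfolding weight_def set_borel_measurable_def by auto

lemma wmeas:
  assumes "weight w" and [measurable]: "h \<in> borel_measurable borel" and "A \<subseteq> {0<..}" and [measurable]: "A \<in> sets borel"
  shows "(\<lambda>x. ennreal (h x * w x) * indicator A x) \<in> borel_measurable lborel"
proof -
  have "(\<lambda>x. ennreal (h x * w x) * indicator A x) = (\<lambda>x. ennreal (h x * (indicator {0<..} x *\<^sub>R w x)) * indicator A x)"
    using assms(3) by (auto simp: fun_eq_iff indicator_def)
  also have "\<dots> \<in> borel_measurable lborel" using assms(1) by measurable
  finally show ?thesis .
qed

lemma nn_split: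
  fixes g :: "real \<Rightarrow> ennreal"
  assumes "a \<le> b" "b \<le> c" and [measurable]: "g \<in> borel_measurable lborel"
  shows "(\<integral>\<^sup>+ x. g x * indicator {a<..c} x \<partial>lborel) =
         (\<integral>\<^sup>+ x. g x * indicator {a<..b} x \<partial>lborel) + (\<integral>\<^sup>+ x. g x * indicator {b<..c} x \<partial>lborel)"
proof -
  have "(\<integral>\<^sup>+ x. g x * indicator {a<..c} x \<partial>lborel) =
        (\<integral>\<^sup>+ x. g x * indicator {a<..b} x + g x * indicator {b<..c} x \<partial>lborel)"
    using assms(1,2) by (intro nn_integral_cong) (auto simp: indicator_def)
  also have "\<dots> = (\<integral>\<^sup>+ x. g x * indicator {a<..b} x \<partial>lborel) + (\<integral>\<^sup>+ x. g x * indicator {b<..c} x \<partial>lborel)" by (rule nn_integral_add) auto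
  finally show ?thesis .
qed

lemma W_nn:
  assumes "weight w"
  shows "(\<integral>\<^sup>+ x. ennreal (w x) * indicator {0<..t} x \<partial>lborel) = ennreal (Wprim w t)"
proof (cases "t > 0")
  case True
  have int: "integrable lborel (\<lambda>x. indicator {0<..t} x *\<^sub>R w x)"
    using assms True unfolding weight_def set_integrable_def by auto
  have "(\<integral>\<^sup>+ x. ennreal (w x) * indicator {0<..t} x \<partial>lborel) = (\<integral>\<^sup>+ x. ennreal (indicator {0<..t} x *\<^sub>R w x) \<partial>lborel)"
    by (intro nn_integral_cong) (auto simp: indicator_def)
  also have "\<dots> = ennreal (integral\<^sup>L lborel (\<lambda>x. indicator {0<..t} x *\<^sub>R w x))"
    using assms by (intro nn_integral_eq_integral int) (auto simp: weight_def indicator_def)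
  finally show ?thesis by (simp add: Wprim_def set_lebesgue_integral_def)
next
  case False
  then have "{0<..t} = {}" by auto
  then show ?thesis by (simp add: Wprim_def set_lebesgue_integral_def)
qed

lemma W_nonneg:
  assumes "weight w" shows "0 \<le> Wprim w t"
proof (cases "t > 0")
  case True
  then show ?thesis using assms unfolding Wprim_def weight_def set_lebesgue_integral_def
    by (intro Bochner_Integration.integral_nonneg) (auto simp: indicator_def)
next
  case False
  then have "{0<..t} = {}" by auto
  then show ?thesis by (simp add: Wprim_def set_lebesgue_integral_def)
qed

lemma W_int:
  assumes "weight w" "0 \<le> a" "a \<le> b"
  shows "(\<integral>\<^sup>+ x. ennreal (w x) * indicator {a<..b} x \<partial>lborel) = ennreal (Wprim w b - Wprim w a)"
    and "Wprim w a \<le> Wprim w b"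
proof -
  have m: "(\<lambda>x. ennreal (w x) * indicator {0<..b} x) \<in> borel_measurable lborel"
    using wmeas[OF assms(1), of "\<lambda>_. 1" "{0<..b}"] by (auto simp: subset_eq)
  have E: "ennreal (Wprim w b) = ennreal (Wprim w a) + (\<integral>\<^sup>+ x. ennreal (w x) * indicator {a<..b} x \<partial>lborel)"
    using nn_split[OF assms(2,3) m] W_nn[OF assms(1)]
    using assms(2,3) by (simp add: mult.assoc indicator_inter_arith[symmetric] min_absorb2 max_absorb2 flip: indicator_times)
  moreover have "0 \<le> Wprim w a" "0 \<le> Wprim w b" using W_nonneg[OF assms(1)] by auto
  ultimately show "(\<integral>\<^sup>+ x. ennreal (w x) * indicator {a<..b} x \<partial>lborel) = ennreal (Wprim w b - Wprim w a)"
    by (metis ennreal_add_diff_cancel_left ennreal_minus ennreal_neq_top)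
  from E have "ennreal (Wprim w a) \<le> ennreal (Wprim w b)" by simp
  then show "Wprim w a \<le> Wprim w b" using \<open>0 \<le> Wprim w a\<close> \<open>0 \<le> Wprim w b\<close> by simp
qed
lemma W_zero: "t \<le> 0 \<Longrightarrow> Wprim w t = 0"
proof -
  assume "t \<le> 0"
  then have "{0<..t} = {}" by auto
  then show ?thesis by (simp add: Wprim_def set_lebesgue_integral_def)
qed

lemma W_mono:
  assumes "weight w" "s \<le> t" shows "Wprim w s \<le> Wprim w t"
proof (cases "s \<le> 0")
  case True
  then show ?thesis using W_zero W_nonneg[OF assms(1)] by simp
next
  case False
  then show ?thesis using W_int(2)[OF assms(1), of s t] assms by simp
qed

lemma W_upper:
  assumes "decreasing_weight w" "0 < a" "a \<le> b"
  shows "Wprim w b - Wprim w a \<le> w a * (b - a)"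
proof -
  have wt: "weight w" using assms(1) by (simp add: decreasing_weight_def)
  have "ennreal (Wprim w b - Wprim w a) = (\<integral>\<^sup>+ x. ennreal (w x) * indicator {a<..b} x \<partial>lborel)"
    using W_int(1)[OF wt _ assms(3)] assms(2) by simp
  also have "\<dots> \<le> (\<integral>\<^sup>+ x. ennreal (w a) * indicator {a<..b} x \<partial>lborel)"
    using assms(1,2) by (intro nn_integral_mono) (auto simp: indicator_def decreasing_weight_def ennreal_leI)
  also have "\<dots> = ennreal (w a) * ennreal (b - a)"
    using assms by (simp add: nn_integral_cmult_indicator)
  also have "\<dots> = ennreal (w a * (b - a))"
    using assms wt by (simp add: ennreal_mult weight_def)
  finally show ?thesis
    using assms wt by (simp add: ennreal_le_iff weight_def)
qed

lemma W_lower: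
  assumes "decreasing_weight w" "0 \<le> a" "a < b"
  shows "w b * (b - a) \<le> Wprim w b - Wprim w a"
proof -
  have wt: "weight w" using assms(1) by (simp add: decreasing_weight_def)
  have "ennreal (w b * (b - a)) = ennreal (w b) * ennreal (b - a)"
    using assms wt by (simp add: ennreal_mult weight_def)
  also have "\<dots> = (\<integral>\<^sup>+ x. ennreal (w b) * indicator {a<..b} x \<partial>lborel)"
    using assms by (simp add: nn_integral_cmult_indicator)
  also have "\<dots> \<le> (\<integral>\<^sup>+ x. ennreal (w x) * indicator {a<..b} x \<partial>lborel)"
    using assms(1,2) by (intro nn_integral_mono) (auto simp: indicator_def decreasing_weight_def ennreal_leI)
  also have "\<dots> = ennreal (Wprim w b - Wprim w a)"
    using W_int(1)[OF wt assms(2)] assms(3) by simp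
  finally show ?thesis
    using assms W_int(2)[OF wt assms(2), of b] by (simp add: ennreal_le_iff)
qed

lemma W_ge:
  assumes "decreasing_weight w" "0 < a" shows "a * w a \<le> Wprim w a"
  using W_lower[OF assms(1) order.refl assms(2)] W_zero[of 0 w] by (simp add: mult.commute)

lemma V_dec:
  assumes "decreasing_weight w" "0 < a" "a \<le> b"
  shows "Wprim w b / b \<le> Wprim w a / a"
proof -
  have "Wprim w b \<le> Wprim w a + w a * (b - a)" using W_upper[OF assms] by simp
  also have "\<dots> \<le> Wprim w a + (Wprim w a / a) * (b - a)"
    using W_ge[OF assms(1,2)] assms(2,3) by (intro add_left_mono mult_right_mono) (auto simp: field_simps)
  also have "\<dots> = Wprim w a * b / a" using assms(2) by (simp add: field_simps)
  finally show ?thesis using assms(2,3) by (simp add: field_simps)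
qed

lemma nn_SUP_sets:
  fixes g :: "real \<Rightarrow> ennreal"
  assumes gm: "(\<lambda>x. g x * indicator C x) \<in> borel_measurable lborel" and [measurable]: "\<And>n. A n \<in> sets borel"
    and AC: "\<And>n. A n \<subseteq> C"
    and inc: "\<And>n. A n \<subseteq> A (Suc n)" and B: "\<And>x. x \<in> B \<longleftrightarrow> (\<exists>n. x \<in> A n)"
  shows "(\<integral>\<^sup>+ x. g x * indicator B x \<partial>lborel) = (SUP n. \<integral>\<^sup>+ x. g x * indicator (A n) x \<partial>lborel)"
proof -
  define g' where "g' x = g x * indicator C x" for x
  have [measurable]: "g' \<in> borel_measurable lborel" using gm by (simp add: g'_def[abs_def])
  have eqA: "g x * indicator (A n) x = g' x * indicator (A n) x" for x n
    using AC[of n] by (auto simp: g'_def indicator_def)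
  have eqB: "g x * indicator B x = g' x * indicator B x" for x
    using AC B by (auto simp: g'_def indicator_def)
  have "(\<integral>\<^sup>+ x. g' x * indicator B x \<partial>lborel) = (SUP n. \<integral>\<^sup>+ x. g' x * indicator (A n) x \<partial>lborel)"
  proof -
  have mono: "m \<le> n \<Longrightarrow> A m \<subseteq> A n" for m n
    using inc by (rule lift_Suc_mono_le)
  have pt: "g' x * indicator B x = (SUP n. g' x * indicator (A n) x)" for x
  proof (cases "x \<in> B")
    case True
    then obtain n where n: "x \<in> A n" using B by auto
    show ?thesis
    proof (rule antisym)
      show "g' x * indicator B x \<le> (SUP n. g' x * indicator (A n) x)"
        using True n by (intro SUP_upper2[of n]) auto
      show "(SUP n. g' x * indicator (A n) x) \<le> g' x * indicator B x"
        using True by (intro SUP_least) (auto simp: indicator_def)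
    qed
  next
    case False
    then have "\<And>n. x \<notin> A n" using B by auto
    then show ?thesis using False by simp
  qed
  have "(\<integral>\<^sup>+ x. g' x * indicator B x \<partial>lborel) = (\<integral>\<^sup>+ x. (SUP n. g' x * indicator (A n) x) \<partial>lborel)"
    by (simp add: pt)
  also have "\<dots> = (SUP n. \<integral>\<^sup>+ x. g' x * indicator (A n) x \<partial>lborel)"
  proof (rule nn_integral_monotone_convergence_SUP)
    show "incseq (\<lambda>n x. g' x * indicator (A n) x)"
      by (intro monoI le_funI mult_left_mono) (auto simp: indicator_def dest: mono)
  qed auto
  finally show ?thesis .
qed
  then show ?thesis by (simp add: eqA eqB)
qed

lemma W_tends0:
  assumes wt: "weight w" and r: "0 < r" and e: "0 < e"
  shows "\<exists>n. Wprim w (r / 2 ^ n) < e"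
proof (rule ccontr)
  assume "\<not> ?thesis"
  then have ge: "\<And>n. e \<le> Wprim w (r / 2 ^ n)" by (simp add: not_less)
  have m: "(\<lambda>x. ennreal (w x) * indicator {0<..r} x) \<in> borel_measurable lborel"
    using wmeas[OF wt, of "\<lambda>_. 1" "{0<..r}"] by (auto simp: subset_eq)
  have m': "(\<lambda>x. ennreal (w x) * indicator {0<..} x) \<in> borel_measurable lborel"
    using wmeas[OF wt, of "\<lambda>_. 1" "{0<..}"] by (auto simp: subset_eq)
  have "(\<integral>\<^sup>+ x. ennreal (w x) * indicator {0<..r} x \<partial>lborel) =
        (SUP n. \<integral>\<^sup>+ x. ennreal (w x) * indicator {r / 2 ^ n<..r} x \<partial>lborel)"
  proof (rule nn_SUP_sets[OF m'])
    fix n :: nat show "{r / 2 ^ n<..r} \<subseteq> {0<..}" using r by (auto intro: less_trans[rotated])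
  next
    fix x :: real
    show "x \<in> {0<..r} \<longleftrightarrow> (\<exists>n. x \<in> {r / 2 ^ n<..r})"
    proof
      assume x: "x \<in> {0<..r}"
      obtain n where "r / x < 2 ^ n" using real_arch_pow[of 2 "r / x"] by auto
      then have "r / 2 ^ n < x" using x by (simp add: field_simps)
      then show "\<exists>n. x \<in> {r / 2 ^ n<..r}" using x by auto
    next
      assume "\<exists>n. x \<in> {r / 2 ^ n<..r}"
      then obtain n where "x \<in> {r / 2 ^ n<..r}" by auto
      moreover have "0 < r / 2 ^ n" using r by simp
      ultimately show "x \<in> {0<..r}" by auto
    qed
  next
    fix n :: nat
    have "r / 2 ^ Suc n \<le> r / 2 ^ n" using r by (simp add: field_simps)
    then show "{r / 2 ^ n<..r} \<subseteq> {r / 2 ^ Suc n<..r}" by auto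
  qed auto
  also have "\<dots> \<le> ennreal (Wprim w r - e)"
  proof (rule SUP_least)
    fix n :: nat
    have "(\<integral>\<^sup>+ x. ennreal (w x) * indicator {r / 2 ^ n<..r} x \<partial>lborel) = ennreal (Wprim w r - Wprim w (r / 2 ^ n))"
      using r by (intro W_int(1)[OF wt]) (auto simp: field_simps)
    also have "\<dots> \<le> ennreal (Wprim w r - e)" using ge[of n] by (intro ennreal_leI) simp
    finally show "(\<integral>\<^sup>+ x. ennreal (w x) * indicator {r / 2 ^ n<..r} x \<partial>lborel) \<le> ennreal (Wprim w r - e)" .
  qed
  finally have "ennreal (Wprim w r) \<le> ennreal (Wprim w r - e)" using W_nn[OF wt] by simp
  moreover have "e \<le> Wprim w r" using ge[of 0] by simp
  ultimately show False using e by (simp add: ennreal_le_iff)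
qed

lemma small_W:
  assumes dw: "decreasing_weight w" and r: "0 < r" and pos: "0 < Wprim w r"
  shows "\<exists>s. 0 < s \<and> s < r \<and> Wprim w r / 4 < Wprim w s \<and> Wprim w s \<le> Wprim w r / 2"
proof -
  have wt: "weight w" using dw by (simp add: decreasing_weight_def)
  define P where "P n \<longleftrightarrow> Wprim w (r / 2 ^ n) \<le> Wprim w r / 2" for n :: nat
  obtain n where "Wprim w (r / 2 ^ n) < Wprim w r / 2" using W_tends0[OF wt r, of "Wprim w r / 2"] pos by auto
  then have Pn: "P n" by (simp add: P_def)
  define m where "m = (LEAST n. P n)"
  have Pm: "P m" unfolding m_def by (rule LeastI[of P n, OF Pn])
  have m0: "m \<noteq> 0"
  proof
    assume "m = 0" then show False using Pm pos by (simp add: P_def)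
  qed
  then obtain k where k: "m = Suc k" by (cases m) auto
  have nPk: "\<not> P k" using not_less_Least[of k P] k m_def by simp
  define s where "s = r / 2 ^ m"
  define p where "p = r / 2 ^ k"
  have s0: "0 < s" using r by (simp add: s_def)
  have ps: "p = 2 * s" by (simp add: s_def p_def k)
  have "Wprim w p / p \<le> Wprim w s / s" using V_dec[OF dw s0, of p] ps s0 by simp
  then have "Wprim w p \<le> 2 * Wprim w s" using ps s0 by (simp add: field_simps)
  moreover have "Wprim w r / 2 < Wprim w p" using nPk by (simp add: P_def p_def)
  ultimately have "Wprim w r / 4 < Wprim w s" by simp
  moreover have "s < r"
  proof -
    have "(1::real) < 2 * 2 ^ k" using one_le_power[of "2::real" k] by linarith
    then show ?thesis using r k by (simp add: s_def field_simps)
  qed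
  ultimately show ?thesis using Pm s0 by (auto simp: P_def s_def)
qed



lemma W_borel [measurable]:
  assumes "weight w" shows "Wprim w \<in> borel_measurable borel"
  by (rule borel_measurable_mono) (auto simp: mono_def intro: W_mono[OF assms])

lemma powr_q_split: "0 \<le> (x::real) \<Longrightarrow> x powr (q - 1) * x = x powr q"
proof -
  assume x: "0 \<le> x"
  have "x powr q = x powr ((q - 1) + 1)" by simp
  also have "\<dots> = x powr (q - 1) * x powr 1" by (rule powr_add)
  also have "\<dots> = x powr (q - 1) * x" using x by simp
  finally show ?thesis by simp
qed

lemma wq_weight:
  assumes dw: "decreasing_weight w" and q: "1 < q"
  shows "weight (\<lambda>t. Wprim w t powr (q - 1) * w t)"
proof -
  have wt: "weight w" using dw by (simp add: decreasing_weight_def)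
  have nn: "\<forall>t>0. 0 \<le> Wprim w t powr (q - 1) * w t" using wt by (auto simp: weight_def)
  have "(\<lambda>x. indicator {0<..} x *\<^sub>R (Wprim w x powr (q - 1) * w x)) =
        (\<lambda>x. Wprim w x powr (q - 1) * (indicator {0<..} x *\<^sub>R w x))" by (auto simp: fun_eq_iff)
  also have "\<dots> \<in> borel_measurable borel" using wt by measurable
  finally have meas: "set_borel_measurable lborel {0<..} (\<lambda>t. Wprim w t powr (q - 1) * w t)"
    by (simp add: set_borel_measurable_def)
  have int: "set_integrable lborel {0<..t} (\<lambda>t. Wprim w t powr (q - 1) * w t)" if t: "t > 0" for t
  proof (rule set_integrable_bound)
    show "set_integrable lborel {0<..t} (\<lambda>x. w x * Wprim w t powr (q - 1))"
      using wt t by (intro set_integrable_mult_left) (auto simp: weight_def)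
    show "set_borel_measurable lborel {0<..t} (\<lambda>t. Wprim w t powr (q - 1) * w t)"
      using meas by (rule set_borel_measurable_subset) auto
    show "AE x in lborel. x \<in> {0<..t} \<longrightarrow> norm (Wprim w x powr (q - 1) * w x) \<le> norm (w x * Wprim w t powr (q - 1))"
    proof (rule AE_I2, safe)
      fix x assume x: "x \<in> {0<..t}"
      have "Wprim w x powr (q - 1) \<le> Wprim w t powr (q - 1)"
        using x q W_nonneg[OF wt] W_mono[OF wt, of x t] by (intro powr_mono2) auto
      then show "norm (Wprim w x powr (q - 1) * w x) \<le> norm (w x * Wprim w t powr (q - 1))"
        using x wt by (auto simp: weight_def abs_mult mult.commute intro!: mult_left_mono)
    qed
  qed
  show ?thesis using nn meas int by (simp add: weight_def)
qed

lemma level_fwd: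
  assumes dw: "decreasing_weight w" and b1: "B1 w" and q: "1 < q"
  shows "level_equiv w q (\<lambda>t. Wprim w t powr (q - 1) * w t)"
proof -
  define u where "u = (\<lambda>t. Wprim w t powr (q - 1) * w t)"
  have wt: "weight w" using dw by (simp add: decreasing_weight_def)
  have ut: "weight u" unfolding u_def by (rule wq_weight[OF dw q])
  obtain C0 where C0: "\<And>r. r > 0 \<Longrightarrow> (\<integral>\<^sup>+ s\<in>{r<..}. ennreal (w s / s) \<partial>lborel) \<le> ennreal (C0 / r * Wprim w r)"
    using b1 unfolding B1_def by auto
  define B where "B = max C0 0"
  have B0: "0 \<le> B" by (simp add: B_def)
  define K where "K = 2 * 4 powr (q - 1)"
  have K0: "0 < K" by (simp add: K_def)
  define T where "T r = (\<integral>\<^sup>+ x\<in>{r<..}. ennreal (u x * x powr (- q)) \<partial>lborel)" for r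
  have Wn: "\<And>t. 0 \<le> Wprim w t" using W_nonneg[OF wt] .
  have up1: "ennreal (Wprim u r) \<le> ennreal (Wprim w r powr q)" if r: "r > 0" for r
  proof -
    have "ennreal (Wprim u r) = (\<integral>\<^sup>+ x. ennreal (u x) * indicator {0<..r} x \<partial>lborel)"
      using W_nn[OF ut] by simp
    also have "\<dots> \<le> (\<integral>\<^sup>+ x. ennreal (Wprim w r powr (q - 1)) * (ennreal (w x) * indicator {0<..r} x) \<partial>lborel)"
    proof (intro nn_integral_mono)
      fix x
      show "ennreal (u x) * indicator {0<..r} x \<le> ennreal (Wprim w r powr (q - 1)) * (ennreal (w x) * indicator {0<..r} x)"
      proof (cases "x \<in> {0<..r}")
        case True
        have "Wprim w x powr (q - 1) \<le> Wprim w r powr (q - 1)"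
          using True q Wn W_mono[OF wt, of x r] by (intro powr_mono2) auto
        then have "u x \<le> Wprim w r powr (q - 1) * w x"
          using True wt by (auto simp: u_def weight_def intro!: mult_right_mono)
        then have "ennreal (u x) \<le> ennreal (Wprim w r powr (q - 1) * w x)" by (rule ennreal_leI)
        then show ?thesis using True by (simp add: ennreal_mult')
      qed simp
    qed
    also have "\<dots> = ennreal (Wprim w r powr (q - 1)) * (\<integral>\<^sup>+ x. ennreal (w x) * indicator {0<..r} x \<partial>lborel)"
      using wmeas[OF wt, of "\<lambda>_. 1" "{0<..r}"] by (intro nn_integral_cmult) (auto simp: subset_eq)
    also have "\<dots> = ennreal (Wprim w r powr (q - 1) * Wprim w r)"
      using W_nn[OF wt] Wn by (simp add: ennreal_mult')
    also have "\<dots> = ennreal (Wprim w r powr q)" using powr_q_split[OF Wn] by simp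
    finally show ?thesis .
  qed
  have up2: "ennreal (r powr q) * T r \<le> ennreal (B * Wprim w r powr q)" if r: "r > 0" for r
  proof -
    define V where "V = Wprim w r / r"
    have V0: "0 \<le> V" using Wn r by (simp add: V_def)
    have "T r \<le> (\<integral>\<^sup>+ x. ennreal (V powr (q - 1)) * (ennreal (w x / x) * indicator {r<..} x) \<partial>lborel)"
      unfolding T_def
    proof (intro nn_integral_mono)
      fix x
      show "ennreal (u x * x powr - q) * indicator {r<..} x \<le> ennreal (V powr (q - 1)) * (ennreal (w x / x) * indicator {r<..} x)"
      proof (cases "x \<in> {r<..}")
        case True
        then have x: "x > 0" "r \<le> x" using r by auto
        have e1: "x powr - q = 1 / (x powr (q - 1) * x)"
          using x powr_q_split[of x q] by (simp add: powr_minus divide_simps)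
        have "u x * x powr - q = (Wprim w x / x) powr (q - 1) * (w x / x)"
          using x Wn by (simp add: u_def e1 powr_divide)
        also have "\<dots> \<le> V powr (q - 1) * (w x / x)"
        proof (intro mult_right_mono powr_mono2)
          show "Wprim w x / x \<le> V" unfolding V_def by (rule V_dec[OF dw r x(2)])
        qed (use q x wt Wn in \<open>auto simp: weight_def\<close>)
        finally have "u x * x powr - q \<le> V powr (q - 1) * (w x / x)" .
        then have "ennreal (u x * x powr - q) \<le> ennreal (V powr (q - 1) * (w x / x))" by (rule ennreal_leI)
        also have "\<dots> = ennreal (V powr (q - 1)) * ennreal (w x / x)" by (rule ennreal_mult') simp
        finally show ?thesis using True by simp
      qed simp
    qed
    also have "\<dots> = ennreal (V powr (q - 1)) * (\<integral>\<^sup>+ x. ennreal (w x / x) * indicator {r<..} x \<partial>lborel)"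
    proof (rule nn_integral_cmult)
      have "(\<lambda>x. ennreal (w x / x) * indicator {r<..} x) = (\<lambda>x. ennreal ((1 / x) * w x) * indicator {r<..} x)"
        by (simp add: fun_eq_iff)
      also have "\<dots> \<in> borel_measurable lborel" using r by (intro wmeas[OF wt]) auto
      finally show "(\<lambda>x. ennreal (w x / x) * indicator {r<..} x) \<in> borel_measurable lborel" .
    qed
    also have "\<dots> \<le> ennreal (V powr (q - 1)) * ennreal (C0 / r * Wprim w r)"
      using C0[OF r] by (intro mult_left_mono) auto
    also have "\<dots> \<le> ennreal (V powr (q - 1)) * ennreal (B / r * Wprim w r)"
      using r Wn by (intro mult_left_mono ennreal_leI mult_right_mono divide_right_mono) (auto simp: B_def)
    also have "\<dots> = ennreal (V powr (q - 1) * (B / r * Wprim w r))"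
      by (rule ennreal_mult'[symmetric]) simp
    finally have "ennreal (r powr q) * T r \<le> ennreal (r powr q) * ennreal (V powr (q - 1) * (B / r * Wprim w r))"
      by (intro mult_left_mono) auto
    also have "\<dots> = ennreal (r powr q * (V powr (q - 1) * (B / r * Wprim w r)))"
      by (rule ennreal_mult'[symmetric]) simp
    also have "r powr q * (V powr (q - 1) * (B / r * Wprim w r)) = B * Wprim w r powr q"
    proof -
      have "r powr q * (V powr (q - 1) * (B / r * Wprim w r))
          = B * ((r powr (q - 1) * r) * (Wprim w r powr (q - 1) / r powr (q - 1)) * (Wprim w r / r))"
        using r Wn powr_q_split[of r q] by (simp add: V_def powr_divide)
      also have "\<dots> = B * (Wprim w r powr (q - 1) * Wprim w r)"
        using r by (simp add: field_simps)
      also have "\<dots> = B * Wprim w r powr q" using powr_q_split[OF Wn] by simp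
      finally show ?thesis .
    qed
    finally show ?thesis .
  qed
  have low: "Wprim w r powr q \<le> K * Wprim u r" if r: "r > 0" for r
  proof (cases "Wprim w r = 0")
    case True
    then show ?thesis using W_nonneg[OF ut, of r] K0 by simp
  next
    case False
    then have pos: "0 < Wprim w r" using Wn[of r] by simp
    obtain s where s: "0 < s" "s < r" "Wprim w r / 4 < Wprim w s" "Wprim w s \<le> Wprim w r / 2"
      using small_W[OF dw r pos] by auto
    have "ennreal (Wprim w s powr (q - 1) * (Wprim w r - Wprim w s)) =
          ennreal (Wprim w s powr (q - 1)) * (\<integral>\<^sup>+ x. ennreal (w x) * indicator {s<..r} x \<partial>lborel)"
      using W_int(1)[OF wt, of s r] s by (simp add: ennreal_mult')
    also have "\<dots> = (\<integral>\<^sup>+ x. ennreal (Wprim w s powr (q - 1)) * (ennreal (w x) * indicator {s<..r} x) \<partial>lborel)"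
      using wmeas[OF wt, of "\<lambda>_. 1" "{s<..r}"] s by (intro nn_integral_cmult[symmetric]) (auto simp: subset_eq)
    also have "\<dots> \<le> (\<integral>\<^sup>+ x. ennreal (u x) * indicator {0<..r} x \<partial>lborel)"
    proof (intro nn_integral_mono)
      fix x
      show "ennreal (Wprim w s powr (q - 1)) * (ennreal (w x) * indicator {s<..r} x) \<le> ennreal (u x) * indicator {0<..r} x"
      proof (cases "x \<in> {s<..r}")
        case True
        have "Wprim w s powr (q - 1) \<le> Wprim w x powr (q - 1)"
          using True q Wn W_mono[OF wt, of s x] by (intro powr_mono2) auto
        then have "Wprim w s powr (q - 1) * w x \<le> u x"
          using True s wt by (auto simp: u_def weight_def intro!: mult_right_mono)
        then have "ennreal (Wprim w s powr (q - 1) * w x) \<le> ennreal (u x)" by (rule ennreal_leI)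
        moreover have "x \<in> {0<..r}" using True s by auto
        ultimately show ?thesis using True by (simp add: ennreal_mult')
      qed simp
    qed
    also have "\<dots> = ennreal (Wprim u r)" using W_nn[OF ut] by simp
    finally have A: "Wprim w s powr (q - 1) * (Wprim w r - Wprim w s) \<le> Wprim u r"
      using W_nonneg[OF ut, of r] by (simp add: ennreal_le_iff)
    have "(Wprim w r / 4) powr (q - 1) * (Wprim w r / 2) \<le> Wprim w s powr (q - 1) * (Wprim w r - Wprim w s)"
      using s q pos by (intro mult_mono powr_mono2) auto
    also have "(Wprim w r / 4) powr (q - 1) * (Wprim w r / 2) = Wprim w r powr q / K"
      using pos powr_q_split[of "Wprim w r" q] by (simp add: K_def powr_divide field_simps)
    finally have "Wprim w r powr q / K \<le> Wprim u r" using A by linarith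
    then show ?thesis using K0 by (simp add: field_simps)
  qed
  have c0: "0 < 1 / (1 + B)" using B0 by simp
  have main: "ennreal (1 / (1 + B)) * (ennreal (Wprim (\<lambda>t. Wprim w t powr (q - 1) * w t) r) + ennreal (r powr q) *
        (\<integral>\<^sup>+ x\<in>{r<..}. ennreal (Wprim w x powr (q - 1) * w x * x powr (- q)) \<partial>lborel)) \<le> ennreal (Wprim w r powr q) \<and>
        ennreal (Wprim w r powr q) \<le> ennreal K * (ennreal (Wprim (\<lambda>t. Wprim w t powr (q - 1) * w t) r) + ennreal (r powr q) *
        (\<integral>\<^sup>+ x\<in>{r<..}. ennreal (Wprim w x powr (q - 1) * w x * x powr (- q)) \<partial>lborel))"
    if r: "0 < r" for r
  proof

    have Tr: "T r = (\<integral>\<^sup>+ x\<in>{r<..}. ennreal (u x * x powr (- q)) \<partial>lborel)" by (simp add: T_def)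
    have "ennreal (1 / (1 + B)) * (ennreal (Wprim u r) + ennreal (r powr q) * T r)
        \<le> ennreal (1 / (1 + B)) * (ennreal (Wprim w r powr q) + ennreal (B * Wprim w r powr q))"
      using up1[OF r] up2[OF r] by (intro mult_left_mono add_mono) auto
    also have "\<dots> = ennreal (1 / (1 + B) * (Wprim w r powr q + B * Wprim w r powr q))"
    proof -
      have "ennreal (Wprim w r powr q) + ennreal (B * Wprim w r powr q) = ennreal (Wprim w r powr q + B * Wprim w r powr q)"
        using B0 by (intro ennreal_plus[symmetric]) auto
      then show ?thesis by (metis ennreal_mult' c0 less_imp_le)
    qed
    also have "1 / (1 + B) * (Wprim w r powr q + B * Wprim w r powr q) = Wprim w r powr q"
      using B0 by (simp add: field_simps)
    finally show "ennreal (1 / (1 + B)) * (ennreal (Wprim (\<lambda>t. Wprim w t powr (q - 1) * w t) r) + ennreal (r powr q) *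
        (\<integral>\<^sup>+ x\<in>{r<..}. ennreal (Wprim w x powr (q - 1) * w x * x powr (- q)) \<partial>lborel)) \<le> ennreal (Wprim w r powr q)"
      by (simp add: T_def u_def)
    have "ennreal (Wprim w r powr q) \<le> ennreal (K * Wprim u r)" using low[OF r] by (rule ennreal_leI)
    also have "\<dots> = ennreal K * ennreal (Wprim u r)" using K0 by (intro ennreal_mult') simp
    also have "\<dots> \<le> ennreal K * (ennreal (Wprim u r) + ennreal (r powr q) * T r)"
      by (intro mult_left_mono) auto
    finally show "ennreal (Wprim w r powr q) \<le> ennreal K * (ennreal (Wprim (\<lambda>t. Wprim w t powr (q - 1) * w t) r) + ennreal (r powr q) *
        (\<integral>\<^sup>+ x\<in>{r<..}. ennreal (Wprim w x powr (q - 1) * w x * x powr (- q)) \<partial>lborel))"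
      by (simp add: T_def u_def)
  qed
  show ?thesis unfolding level_equiv_def
    apply (rule exI[of _ "1 / (1 + B)"], rule exI[of _ K])
    apply (intro conjI c0 K0 allI impI)
     apply (erule main[THEN conjunct1])
    apply (erule main[THEN conjunct2])
    done
qed



lemma block_lower:
  assumes dw: "decreasing_weight w" and a: "0 < a" and c: "a \<le> c" and cb: "4 * c \<le> b"
    and Vb: "Wprim w a / a / 2 < Wprim w b / b"
  shows "ennreal (a\<^sup>2 * (Wprim w a / a)\<^sup>2 / 32) \<le>
         (\<integral>\<^sup>+ t. ennreal ((a\<^sup>2 * Wprim w t / t\<^sup>2) * w t) * indicator {c<..4*c} t \<partial>lborel)"
proof -
  have wt: "weight w" using dw by (simp add: decreasing_weight_def)
  have c0: "0 < c" using a c by simp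
  define V where "V x = Wprim w x / x" for x
  have Vdec: "0 < x \<Longrightarrow> x \<le> y \<Longrightarrow> V y \<le> V x" for x y using V_dec[OF dw] by (simp add: V_def)
  have Vb': "V a / 2 < V b" using Vb by (simp add: V_def)
  have Vc: "V b \<le> V c" using Vdec[OF c0] cb c0 by simp
  have V4c: "V b \<le> V (4*c)" using Vdec[of "4*c" b] cb c0 by simp
  have Vca: "V c \<le> V a" using Vdec[OF a c] .
  have Wc: "Wprim w c = c * V c" using c0 by (simp add: V_def)
  have W4c: "Wprim w (4*c) = 4 * c * V (4*c)" using c0 by (simp add: V_def)
  have Va0: "0 \<le> V a" using W_nonneg[OF wt] a by (simp add: V_def)
  have h1: "c * V a / 2 \<le> Wprim w c" using Wc Vb' Vc c0 by (simp add: mult_left_mono)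
  have h2: "c * V a \<le> Wprim w (4*c) - Wprim w c"
  proof -
    have "4 * c * (V a / 2) \<le> 4 * c * V (4*c)" using Vb' V4c c0 by (intro mult_left_mono) auto
    moreover have "c * V c \<le> c * V a" using Vca c0 by (intro mult_left_mono) auto
    ultimately show ?thesis using Wc W4c by (simp add: field_simps)
  qed
  have Wc0: "0 \<le> Wprim w c" using W_nonneg[OF wt] .
  have "a\<^sup>2 * (Wprim w a / a)\<^sup>2 / 32 = (a\<^sup>2 * (c * V a / 2) / (16 * c\<^sup>2)) * (c * V a)"
    using c0 by (simp add: V_def power2_eq_square field_simps)
  also have "\<dots> \<le> (a\<^sup>2 * Wprim w c / (16 * c\<^sup>2)) * (Wprim w (4*c) - Wprim w c)"
    using h1 h2 c0 Va0 Wc0 by (intro mult_mono divide_right_mono mult_left_mono) auto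
  finally have r1: "ennreal (a\<^sup>2 * (Wprim w a / a)\<^sup>2 / 32) \<le> ennreal (a\<^sup>2 * Wprim w c / (16 * c\<^sup>2)) * ennreal (Wprim w (4*c) - Wprim w c)"
    using c0 Wc0 by (simp add: ennreal_mult'[symmetric] ennreal_leI)
  also have "\<dots> = ennreal (a\<^sup>2 * Wprim w c / (16 * c\<^sup>2)) * (\<integral>\<^sup>+ t. ennreal (w t) * indicator {c<..4*c} t \<partial>lborel)"
    using W_int(1)[OF wt, of c "4*c"] c0 by simp
  also have "\<dots> = (\<integral>\<^sup>+ t. ennreal (a\<^sup>2 * Wprim w c / (16 * c\<^sup>2)) * (ennreal (w t) * indicator {c<..4*c} t) \<partial>lborel)"
    using wmeas[OF wt, of "\<lambda>_. 1" "{c<..4*c}"] c0 by (intro nn_integral_cmult[symmetric]) (auto simp: subset_eq)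
  also have "\<dots> \<le> (\<integral>\<^sup>+ t. ennreal ((a\<^sup>2 * Wprim w t / t\<^sup>2) * w t) * indicator {c<..4*c} t \<partial>lborel)"
  proof (intro nn_integral_mono)
    fix t
    show "ennreal (a\<^sup>2 * Wprim w c / (16 * c\<^sup>2)) * (ennreal (w t) * indicator {c<..4*c} t) \<le> ennreal ((a\<^sup>2 * Wprim w t / t\<^sup>2) * w t) * indicator {c<..4*c} t"
    proof (cases "t \<in> {c<..4*c}")
      case True
      then have t: "c < t" "t \<le> 4 * c" by auto
      have "Wprim w c \<le> Wprim w t" using W_mono[OF wt] t by simp
      moreover have "t\<^sup>2 \<le> 16 * c\<^sup>2" using t c0 power_mono[of t "4*c" 2] by (simp add: power_mult_distrib)
      moreover have "0 < t\<^sup>2" using t c0 by simp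
      ultimately have "a\<^sup>2 * Wprim w c / (16 * c\<^sup>2) \<le> a\<^sup>2 * Wprim w t / t\<^sup>2"
        using Wc0 c0 by (intro frac_le mult_left_mono) auto
      then have "a\<^sup>2 * Wprim w c / (16 * c\<^sup>2) * w t \<le> a\<^sup>2 * Wprim w t / t\<^sup>2 * w t"
        using wt t c0 by (intro mult_right_mono) (auto simp: weight_def)
      then have "ennreal (a\<^sup>2 * Wprim w c / (16 * c\<^sup>2) * w t) \<le> ennreal (a\<^sup>2 * Wprim w t / t\<^sup>2 * w t)"
        by (rule ennreal_leI)
      moreover have e: "ennreal (a\<^sup>2 * Wprim w c / (16 * c\<^sup>2)) * ennreal (w t) = ennreal (a\<^sup>2 * Wprim w c / (16 * c\<^sup>2) * w t)"
        by (rule ennreal_mult'[symmetric]) (use Wc0 in simp)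
      moreover have ind: "indicator {c<..4*c} t = (1::ennreal)" using True by simp
      ultimately show ?thesis by (simp only: ind mult_1_right e)
    qed simp
  qed
  finally show ?thesis .
qed

lemma nn_split':
  fixes g :: "real \<Rightarrow> ennreal"
  assumes "a \<le> b" "b \<le> c" and gm: "(\<lambda>x. g x * indicator C x) \<in> borel_measurable lborel" and sub: "{a<..c} \<subseteq> C"
  shows "(\<integral>\<^sup>+ x. g x * indicator {a<..c} x \<partial>lborel) =
         (\<integral>\<^sup>+ x. g x * indicator {a<..b} x \<partial>lborel) + (\<integral>\<^sup>+ x. g x * indicator {b<..c} x \<partial>lborel)"
proof -
  have e: "g x * indicator {p<..r} x = (g x * indicator C x) * indicator {p<..r} x" if "{p<..r} \<subseteq> C" for x p r
    using that by (auto simp: indicator_def)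
  have s1: "{a<..b} \<subseteq> C" "{b<..c} \<subseteq> C" using sub assms(1,2) by auto
  show ?thesis
    using nn_split[OF assms(1,2) gm] by (simp only: e[OF sub] e[OF s1(1)] e[OF s1(2)])
qed

lemma gmeas:
  assumes "weight w" and [measurable]: "h \<in> borel_measurable borel"
  shows "(\<lambda>x. ennreal (h x * w x) * indicator {0<..} x) \<in> borel_measurable lborel"
  using wmeas[OF assms(1,2), of "{0<..}"] by simp

lemma decay:
  assumes dw: "decreasing_weight w" and K0: "0 \<le> K"
    and D: "\<And>a. a > 0 \<Longrightarrow> (\<integral>\<^sup>+ t. ennreal ((a\<^sup>2 * Wprim w t / t\<^sup>2) * w t) * indicator {a<..} t \<partial>lborel) \<le> ennreal (K * (Wprim w a)\<^sup>2)"
    and a: "0 < a" and m: "m = nat \<lceil>32 * K\<rceil> + 1"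
  shows "Wprim w (4 ^ m * a) / (4 ^ m * a) \<le> (Wprim w a / a) / 2"
proof (rule ccontr)
  have wt: "weight w" using dw by (simp add: decreasing_weight_def)
  define b where "b = 4 ^ m * a"
  assume "\<not> ?thesis"
  then have Vb: "Wprim w a / a / 2 < Wprim w b / b" by (simp add: b_def)
  have ab: "a \<le> b" using a by (simp add: b_def)
  have Vba: "Wprim w b / b \<le> Wprim w a / a" by (rule V_dec[OF dw a ab])
  define V where "V = Wprim w a / a"
  have Vpos: "0 < V" using Vb Vba by (simp add: V_def)
  define X where "X = a\<^sup>2 * V\<^sup>2 / 32"
  have X0: "0 \<le> X" by (simp add: X_def)
  define g where "g t = ennreal ((a\<^sup>2 * Wprim w t / t\<^sup>2) * w t)" for t
  have gm: "(\<lambda>x. g x * indicator {0<..} x) \<in> borel_measurable lborel"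
  proof -
    have [measurable]: "Wprim w \<in> borel_measurable borel" by (rule W_borel[OF wt])
    show ?thesis unfolding g_def by (intro gmeas wt) measurable
  qed
  have claim: "n \<le> m \<Longrightarrow> ennreal (real n * X) \<le> (\<integral>\<^sup>+ t. g t * indicator {a<..4^n*a} t \<partial>lborel)" for n
  proof (induction n)
    case 0
    then show ?case by simp
  next
    case (Suc n)
    have le: "a \<le> 4 ^ n * a" "4 ^ n * a \<le> 4 ^ Suc n * a" using a by auto
    have "ennreal (real (Suc n) * X) = ennreal (real n * X + X)"
      by (simp add: algebra_simps)
    also have "\<dots> = ennreal (real n * X) + ennreal X"
      using X0 by (intro ennreal_plus) auto
    also have "\<dots> \<le> (\<integral>\<^sup>+ t. g t * indicator {a<..4^n*a} t \<partial>lborel) + (\<integral>\<^sup>+ t. g t * indicator {4^n*a<..4*(4^n*a)} t \<partial>lborel)"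
    proof (intro add_mono)
      show "ennreal (real n * X) \<le> (\<integral>\<^sup>+ t. g t * indicator {a<..4^n*a} t \<partial>lborel)" using Suc by simp
      have "4 * (4 ^ n * a) \<le> b"
      proof -
        have "(4::real) ^ Suc n \<le> 4 ^ m" using Suc.prems by (intro power_increasing) auto
        then show ?thesis using a by (simp add: b_def)
      qed
      then show "ennreal X \<le> (\<integral>\<^sup>+ t. g t * indicator {4^n*a<..4*(4^n*a)} t \<partial>lborel)"
        using block_lower[OF dw a le(1) _ Vb] unfolding X_def V_def g_def by simp
    qed
    also have "\<dots> = (\<integral>\<^sup>+ t. g t * indicator {a<..4^Suc n*a} t \<partial>lborel)"
    proof -
      have sub: "{a<..4 ^ Suc n * a} \<subseteq> {0<..}" using a by auto
      show ?thesis using nn_split'[OF le gm sub] by (simp add: mult.assoc)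
    qed
    finally show ?case .
  qed
  have "ennreal (real m * X) \<le> (\<integral>\<^sup>+ t. g t * indicator {a<..b} t \<partial>lborel)"
    using claim[of m] by (simp add: b_def)
  also have "\<dots> \<le> (\<integral>\<^sup>+ t. g t * indicator {a<..} t \<partial>lborel)"
    by (intro nn_integral_mono) (auto simp: indicator_def)
  also have "\<dots> \<le> ennreal (K * (Wprim w a)\<^sup>2)" using D[OF a] by (simp add: g_def)
  finally have "real m * X \<le> K * (Wprim w a)\<^sup>2" using K0 by (simp add: ennreal_le_iff)
  moreover have "K * (Wprim w a)\<^sup>2 = 32 * K * X"
  proof -
    have "Wprim w a = V * a" using a by (simp add: V_def)
    then show ?thesis by (simp add: X_def power_mult_distrib)
  qed
  ultimately have "real m * X \<le> 32 * K * X" by simp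
  moreover have "0 < X" using a Vpos by (simp add: X_def)
  ultimately have "real m \<le> 32 * K" by simp
  moreover have "32 * K < real m" using m by linarith
  ultimately show False by simp
qed

lemma B1_from_D:
  assumes dw: "decreasing_weight w" and K0: "0 \<le> K"
    and D: "\<And>a. a > 0 \<Longrightarrow> (\<integral>\<^sup>+ t. ennreal ((a\<^sup>2 * Wprim w t / t\<^sup>2) * w t) * indicator {a<..} t \<partial>lborel) \<le> ennreal (K * (Wprim w a)\<^sup>2)"
  shows "B1 w"
proof -
  have wt: "weight w" using dw by (simp add: decreasing_weight_def)
  define m where "m = nat \<lceil>32 * K\<rceil> + 1"
  define L where "L = (4::real) ^ m"
  have L1: "1 < L" unfolding L_def m_def by (intro one_less_power) auto
  have L0: "0 < L" using L1 by simp
  define V where "V x = Wprim w x / x" for x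
  have V0: "0 \<le> V x" for x using W_nonneg[OF wt, of x] by (cases "x > 0") (auto simp: V_def W_zero)
  have dec: "V (L * x) \<le> V x / 2" if "x > 0" for x
    using decay[OF dw K0 D that m_def] by (simp add: V_def L_def)
  have Vd: "V y \<le> V x" if "0 < x" "x \<le> y" for x y using V_dec[OF dw that] by (simp add: V_def)
  define g where "g t = ennreal (w t / t)" for t
  have gm: "(\<lambda>x. g x * indicator {0<..} x) \<in> borel_measurable lborel"
  proof -
    have "(\<lambda>x. g x * indicator {0<..} x) = (\<lambda>x. ennreal ((1 / x) * w x) * indicator {0<..} x)"
      by (simp add: g_def fun_eq_iff)
    also have "\<dots> \<in> borel_measurable lborel" by (intro gmeas wt) measurable
    finally show ?thesis .
  qed
  have blk: "(\<integral>\<^sup>+ t. g t * indicator {x<..L*x} t \<partial>lborel) \<le> ennreal (L * V x)" if x: "x > 0" for x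
  proof -
    have Lx: "x \<le> L * x" using L1 x by simp
    have "(\<integral>\<^sup>+ t. g t * indicator {x<..L*x} t \<partial>lborel) \<le> (\<integral>\<^sup>+ t. ennreal (1 / x) * (ennreal (w t) * indicator {x<..L*x} t) \<partial>lborel)"
    proof (intro nn_integral_mono)
      fix t
      show "g t * indicator {x<..L*x} t \<le> ennreal (1 / x) * (ennreal (w t) * indicator {x<..L*x} t)"
      proof (cases "t \<in> {x<..L*x}")
        case True
        then have t: "x < t" by auto
        have "w t / t \<le> 1 / x * w t" using t x wt by (auto simp: weight_def divide_simps intro: mult_left_mono)
        then have "ennreal (w t / t) \<le> ennreal (1 / x * w t)" by (rule ennreal_leI)
        also have "\<dots> = ennreal (1 / x) * ennreal (w t)" using x by (intro ennreal_mult') auto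
        finally show ?thesis using True by (simp add: g_def)
      qed simp
    qed
    also have "\<dots> = ennreal (1 / x) * (\<integral>\<^sup>+ t. ennreal (w t) * indicator {x<..L*x} t \<partial>lborel)"
      using wmeas[OF wt, of "\<lambda>_. 1" "{x<..L*x}"] x by (intro nn_integral_cmult) (auto simp: subset_eq)
    also have "\<dots> = ennreal (1 / x) * ennreal (Wprim w (L*x) - Wprim w x)"
      using W_int(1)[OF wt _ Lx] x by simp
    also have "\<dots> = ennreal ((Wprim w (L*x) - Wprim w x) / x)"
      using x by (simp add: ennreal_mult'[symmetric])
    also have "\<dots> \<le> ennreal (L * V (L * x))"
      using x L0 W_nonneg[OF wt, of x] by (intro ennreal_leI) (simp add: V_def divide_right_mono)
    also have "\<dots> \<le> ennreal (L * V x)"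
      using Vd[OF x Lx] L0 by (intro ennreal_leI mult_left_mono) auto
    finally show ?thesis .
  qed
  have ind: "(\<integral>\<^sup>+ t. g t * indicator {x<..L^n*x} t \<partial>lborel) \<le> ennreal (2 * L * V x)" if "x > 0" for n x
    using that
  proof (induction n arbitrary: x)
    case 0
    then show ?case by simp
  next
    case (Suc n)
    have x: "0 < x" by fact
    have Lx: "x \<le> L * x" using L1 x by simp
    have Lnx: "L * x \<le> L ^ n * (L * x)" using L1 x by (simp add: one_le_power)
    have sub: "{x<..L ^ n * (L * x)} \<subseteq> {0<..}" using x by auto
    have "(\<integral>\<^sup>+ t. g t * indicator {x<..L^Suc n*x} t \<partial>lborel) = (\<integral>\<^sup>+ t. g t * indicator {x<..L^n*(L*x)} t \<partial>lborel)"
      by (simp add: mult_ac)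
    also have "\<dots> = (\<integral>\<^sup>+ t. g t * indicator {x<..L*x} t \<partial>lborel) + (\<integral>\<^sup>+ t. g t * indicator {L*x<..L^n*(L*x)} t \<partial>lborel)"
      by (rule nn_split'[OF Lx Lnx gm sub])
    also have "\<dots> \<le> ennreal (L * V x) + ennreal (2 * L * V (L * x))"
      using blk[OF x] Suc.IH[of "L * x"] x L0 by (intro add_mono) auto
    also have "\<dots> \<le> ennreal (L * V x) + ennreal (L * V x)"
      using dec[OF x] L0 by (intro add_mono ennreal_leI) auto
    also have "\<dots> = ennreal (2 * L * V x)"
      using V0[of x] L0 by (simp add: ennreal_plus[symmetric] del: ennreal_plus)
    finally show ?case .
  qed
  show ?thesis unfolding B1_def
  proof (intro exI[of _ "2 * L"] allI impI)
    fix r :: real assume r: "0 < r"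
    have "(\<integral>\<^sup>+ s\<in>{r<..}. ennreal (w s / s) \<partial>lborel) = (SUP n. \<integral>\<^sup>+ t. g t * indicator {r<..L^n*r} t \<partial>lborel)"
      unfolding g_def
    proof (rule nn_SUP_sets[OF gm[unfolded g_def]])
      fix n :: nat
      show "{r<..L ^ n * r} \<subseteq> {0<..}" using r by auto
      have "L ^ n * r \<le> L ^ Suc n * r" using L1 r by (simp add: one_le_power)
      then show "{r<..L ^ n * r} \<subseteq> {r<..L ^ Suc n * r}" by auto
    next
      fix t :: real
      show "t \<in> {r<..} \<longleftrightarrow> (\<exists>n. t \<in> {r<..L ^ n * r})"
      proof
        assume t: "t \<in> {r<..}"
        obtain n where "t / r < L ^ n" using real_arch_pow[OF L1, of "t / r"] by auto
        then have "t < L ^ n * r" using r by (simp add: field_simps)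
        then show "\<exists>n. t \<in> {r<..L ^ n * r}" using t by (auto intro: less_imp_le)
      qed auto
    qed auto
    also have "\<dots> \<le> ennreal (2 * L * V r)"
      using ind[OF r] by (intro SUP_least) auto
    also have "\<dots> = ennreal (2 * L / r * Wprim w r)" by (simp add: V_def)
    finally show "(\<integral>\<^sup>+ s\<in>{r<..}. ennreal (w s / s) \<partial>lborel) \<le> ennreal (2 * L / r * Wprim w r)" .
  qed
qed



lemma cube_exists:
  assumes a: "0 < (a::real)"
  shows "\<exists>S::'a::euclidean_space set. S \<in> sets borel \<and> emeasure lebesgue S = ennreal a"
proof -
  define n where "n = DIM('a)"
  have n0: "0 < n" by (simp add: n_def)
  define l where "l = a powr (1 / real n)"
  have l0: "0 < l" using a by (simp add: l_def)
  define S where "S = cbox (0::'a) (l *\<^sub>R One)"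
  have Sb: "S \<in> sets borel" unfolding S_def by (intro borel_closed closed_cbox)
  have "emeasure lborel S = (\<Prod>b\<in>(Basis::'a set). l)"
    unfolding S_def emeasure_lborel_cbox_eq using l0 by (auto intro!: prod.cong)
  also have "\<dots> = ennreal (l ^ n)" using l0 by (simp add: n_def prod_ennreal[symmetric] ennreal_power)
  also have "l ^ n = a"
  proof -
    have "l ^ n = l powr real n" using l0 by (simp add: powr_realpow)
    also have "\<dots> = a powr (1 / real n * real n)" by (simp add: l_def powr_powr)
    also have "\<dots> = a" using n0 a by simp
    finally show ?thesis .
  qed
  finally have "emeasure lebesgue S = ennreal a" using Sb by simp
  then show ?thesis using Sb by blast
qed

lemma drearr_ind:
  assumes a: "0 < a" and S: "emeasure lebesgue S = ennreal a"
  shows "drearr (indicator S :: 'a::euclidean_space \<Rightarrow> real) s = (if s < a then 1 else 0)"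
proof -
  have set: "{x. \<sigma> < ennreal \<bar>indicator S x :: real\<bar>} = (if \<sigma> < 1 then S else {})" for \<sigma> :: ennreal
    by (auto simp: indicator_def)
  show ?thesis
  proof (cases "s < a")
    case True
    have nle: "\<not> ennreal a \<le> ennreal s"
      using True a by (cases "s \<ge> 0") (auto simp: ennreal_le_iff2 ennreal_neg)
    have "{\<sigma>::ennreal. emeasure lebesgue {x. \<sigma> < ennreal \<bar>indicator S x :: real\<bar>} \<le> ennreal s} = {1..}"
      unfolding set using nle by (auto simp: S not_less)
    then show ?thesis using True by (simp add: drearr_def)
  next
    case False
    then have "ennreal a \<le> ennreal s" by (intro ennreal_leI) simp
    then have "{\<sigma>::ennreal. emeasure lebesgue {x. \<sigma> < ennreal \<bar>indicator S x :: real\<bar>} \<le> ennreal s} = UNIV"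
      unfolding set by (auto simp: S)
    then show ?thesis using False by (simp add: drearr_def bot_ennreal)
  qed
qed

lemma dmax_ind:
  assumes a: "0 < a" and S: "emeasure lebesgue S = ennreal a" and t: "0 < t"
  shows "dmax (indicator S :: 'a::euclidean_space \<Rightarrow> real) t = ennreal (min t a / t)"
proof -
  have "(\<integral>\<^sup>+ s\<in>{0<..<t}. drearr (indicator S :: 'a \<Rightarrow> real) s \<partial>lborel) = (\<integral>\<^sup>+ s. indicator {0<..<min t a} s \<partial>lborel)"
    by (intro nn_integral_cong) (auto simp: drearr_ind[OF a S] indicator_def)
  also have "\<dots> = ennreal (min t a)" using a t by simp
  finally show ?thesis using t a by (simp add: dmax_def ennreal_mult'[symmetric])
qed

lemma enn_powr_ennreal: "0 \<le> x \<Longrightarrow> enn_powr (ennreal x) p = ennreal (x powr p)"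
  by (simp add: enn_powr_def)

lemma enn_powr_half:
  assumes le: "enn_powr X (1/2) \<le> ennreal C * enn_powr Y (1/2)" and Y: "Y \<noteq> \<infinity>" and C: "0 < C"
  shows "X \<le> ennreal (C\<^sup>2) * Y"
proof -
  obtain y where y: "Y = ennreal y" "0 \<le> y" using Y by (cases Y) auto
  have X: "X \<noteq> \<infinity>"
  proof
    assume "X = \<infinity>"
    then have "\<infinity> \<le> ennreal C * ennreal (y powr (1/2))" using le y by (simp add: enn_powr_def)
    then show False by (simp add: ennreal_mult'[symmetric] C less_imp_le top_unique)
  qed
  obtain x where x: "X = ennreal x" "0 \<le> x" using X by (cases X) auto
  have "ennreal (sqrt x) \<le> ennreal (C * sqrt y)"
    using le x y C by (simp add: enn_powr_ennreal powr_half_sqrt ennreal_mult'[symmetric])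
  then have "sqrt x \<le> C * sqrt y" using C y by (simp add: ennreal_le_iff)
  then have "(sqrt x)\<^sup>2 \<le> (C * sqrt y)\<^sup>2" using x by (intro power_mono) auto
  then have "x \<le> C\<^sup>2 * y" using x y by (simp add: power_mult_distrib)
  then show ?thesis using x y by (simp add: ennreal_mult'[symmetric] ennreal_leI)
qed

lemma converse:
  fixes w u :: "real \<Rightarrow> real"
  assumes dw: "decreasing_weight w" and ut: "weight u" and lev: "level_equiv w 2 u"
    and G: "Gamma_spaces_eq TYPE('a::euclidean_space) w 2 u"
  shows "B1 w"
proof -
  have wt: "weight w" using dw by (simp add: decreasing_weight_def)
  obtain c C0 where c: "0 < c" and lv: "\<And>r. r > 0 \<Longrightarrow> ennreal c * (ennreal (Wprim u r) + ennreal (r powr 2) *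
        (\<integral>\<^sup>+ x\<in>{r<..}. ennreal (u x * x powr (- 2)) \<partial>lborel)) \<le> ennreal (Wprim w r powr 2)"
    using lev unfolding level_equiv_def by blast
  obtain C' where C': "0 < C'" and Gs: "(Gamma1q w 2 :: ('a \<Rightarrow> real) set) = Gammaq u 2"
    and Gn: "\<And>f::'a \<Rightarrow> real. f \<in> Gamma1q w 2 \<Longrightarrow> Gamma1q_norm w 2 f \<le> ennreal C' * Gammaq_norm u 2 f"
    using G unfolding Gamma_spaces_eq_def by blast
  define K where "K = C'\<^sup>2 / c"
  show ?thesis
  proof (rule B1_from_D[OF dw, of K])
    show "0 \<le> K" using c by (simp add: K_def)
  next
    fix a :: real assume a: "0 < a"
    obtain S :: "'a set" where Sb: "S \<in> sets borel" and Sm: "emeasure lebesgue S = ennreal a"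
      using cube_exists[OF a] by blast
    define f :: "'a \<Rightarrow> real" where "f = indicator S"
    have dm: "\<And>t. 0 < t \<Longrightarrow> dmax f t = ennreal (min t a / t)"
      unfolding f_def by (rule dmax_ind[OF a Sm])
    have fm: "f \<in> borel_measurable lebesgue"
      unfolding f_def using Sb by (intro borel_measurable_indicator) auto
    define Iu where "Iu = (\<integral>\<^sup>+ t\<in>{0<..}. enn_powr (dmax f t) 2 * ennreal (u t) \<partial>lborel)"
    define Iw where "Iw = (\<integral>\<^sup>+ t\<in>{0<..}. enn_powr (dmax f t) 2 * ennreal (Wprim w t powr (2 - 1) * w t) \<partial>lborel)"
    define T where "T = (\<integral>\<^sup>+ x\<in>{a<..}. ennreal (u x * x powr (- 2)) \<partial>lborel)"
    have Iu_le: "Iu \<le> ennreal (Wprim u a) + ennreal (a powr 2) * T"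
    proof -
      have "Iu \<le> (\<integral>\<^sup>+ t. ennreal (u t) * indicator {0<..a} t + ennreal (a powr 2) * (ennreal (t powr (- 2) * u t) * indicator {a<..} t) \<partial>lborel)"
        unfolding Iu_def
      proof (intro nn_integral_mono)
        fix t :: real
        consider "t \<le> 0" | "0 < t" "t \<le> a" | "a < t" by linarith
        then show "enn_powr (dmax f t) 2 * ennreal (u t) * indicator {0<..} t \<le>
            ennreal (u t) * indicator {0<..a} t + ennreal (a powr 2) * (ennreal (t powr (- 2) * u t) * indicator {a<..} t)"
        proof cases
          case 1 then show ?thesis by simp
        next
          case 2
          then have "dmax f t = ennreal 1" using dm[of t] by simp
          moreover have "enn_powr (ennreal 1) 2 = 1" by (simp add: enn_powr_def)
          ultimately show ?thesis using 2 by simp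
        next
          case 3
          then have t0: "0 < t" using a by simp
          then have "dmax f t = ennreal (a / t)" using dm[of t] 3 by simp
          then have "enn_powr (dmax f t) 2 * ennreal (u t) = ennreal ((a / t)\<^sup>2) * ennreal (u t)"
            using a t0 by (simp add: enn_powr_ennreal)
          also have "\<dots> = ennreal ((a / t)\<^sup>2 * u t)" using ut t0 by (simp add: ennreal_mult' weight_def)
          also have "(a / t)\<^sup>2 * u t = a\<^sup>2 * (t powr (- 2) * u t)"
            using t0 by (simp add: powr_minus power_divide field_simps)
          also have "ennreal (a\<^sup>2 * (t powr (- 2) * u t)) = ennreal (a powr 2) * ennreal (t powr (- 2) * u t)"
            using a by (simp add: ennreal_mult')
          finally show ?thesis using 3 t0 by simp
        qed
      qed
      also have "\<dots> = (\<integral>\<^sup>+ t. ennreal (u t) * indicator {0<..a} t \<partial>lborel) +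
            (\<integral>\<^sup>+ t. ennreal (a powr 2) * (ennreal (t powr (- 2) * u t) * indicator {a<..} t) \<partial>lborel)"
      proof (rule nn_integral_add)
        show "(\<lambda>t. ennreal (u t) * indicator {0<..a} t) \<in> borel_measurable lborel"
          using wmeas[OF ut, of "\<lambda>_. 1" "{0<..a}"] by (auto simp: subset_eq)
        have "(\<lambda>t. ennreal (t powr (- 2) * u t) * indicator {a<..} t) \<in> borel_measurable lborel"
          using a by (intro wmeas[OF ut]) auto
        then show "(\<lambda>t. ennreal (a powr 2) * (ennreal (t powr (- 2) * u t) * indicator {a<..} t)) \<in> borel_measurable lborel"
          by measurable
      qed
      also have "\<dots> = ennreal (Wprim u a) + ennreal (a powr 2) * T"
      proof -
        have "(\<integral>\<^sup>+ t. ennreal (a powr 2) * (ennreal (t powr (- 2) * u t) * indicator {a<..} t) \<partial>lborel) =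
              ennreal (a powr 2) * (\<integral>\<^sup>+ t. ennreal (t powr (- 2) * u t) * indicator {a<..} t \<partial>lborel)"
          using a by (intro nn_integral_cmult wmeas[OF ut]) auto
        also have "(\<integral>\<^sup>+ t. ennreal (t powr (- 2) * u t) * indicator {a<..} t \<partial>lborel) = T"
          unfolding T_def by (intro nn_integral_cong) (simp add: mult.commute)
        finally show ?thesis using W_nn[OF ut, of a] by simp
      qed
      finally show ?thesis .
    qed
    have Iu_bd: "Iu \<le> ennreal (1 / c) * ennreal (Wprim w a powr 2)"
    proof -
      have one: "ennreal (1 / c) * ennreal c = 1" using c by (simp add: ennreal_mult'[symmetric])
      have "Iu \<le> ennreal (1 / c) * ennreal c * (ennreal (Wprim u a) + ennreal (a powr 2) * T)"
        using Iu_le by (simp add: one)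
      also have "\<dots> = ennreal (1 / c) * (ennreal c * (ennreal (Wprim u a) + ennreal (a powr 2) * T))"
        by (simp add: mult.assoc)
      also have "\<dots> \<le> ennreal (1 / c) * ennreal (Wprim w a powr 2)"
        using lv[OF a] by (intro mult_left_mono) (auto simp: T_def)
      finally show ?thesis .
    qed
    have Iu_fin: "Iu \<noteq> \<infinity>"
    proof
      assume "Iu = \<infinity>"
      then have "\<infinity> \<le> ennreal (1 / c) * ennreal (Wprim w a powr 2)" using Iu_bd by simp
      then show False by (simp add: ennreal_mult'[symmetric] top_unique c less_imp_le)
    qed
    have nu: "Gammaq_norm u 2 f = enn_powr Iu (1/2)" unfolding Gammaq_norm_def Iu_def by simp
    have "Gammaq_norm u 2 f < \<infinity>" unfolding nu using Iu_fin by (simp add: enn_powr_def)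
    then have "f \<in> Gammaq u 2" using fm by (simp add: Gammaq_def)
    then have "f \<in> Gamma1q w 2" using Gs by simp
    then have "Gamma1q_norm w 2 f \<le> ennreal C' * Gammaq_norm u 2 f" by (rule Gn)
    moreover have "Gamma1q_norm w 2 f = enn_powr Iw (1/2)" unfolding Gamma1q_norm_def Iw_def by (rule refl)
    ultimately have "enn_powr Iw (1/2) \<le> ennreal C' * enn_powr Iu (1/2)" by (simp add: nu)
    then have Iw_bd: "Iw \<le> ennreal (C'\<^sup>2) * Iu" by (rule enn_powr_half[OF _ Iu_fin C'])
    have "(\<integral>\<^sup>+ t. ennreal ((a\<^sup>2 * Wprim w t / t\<^sup>2) * w t) * indicator {a<..} t \<partial>lborel) \<le> Iw"
      unfolding Iw_def
    proof (intro nn_integral_mono)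
      fix t :: real
      show "ennreal ((a\<^sup>2 * Wprim w t / t\<^sup>2) * w t) * indicator {a<..} t \<le>
          enn_powr (dmax f t) 2 * ennreal (Wprim w t powr (2 - 1) * w t) * indicator {0<..} t"
      proof (cases "a < t")
        case True
        then have t0: "0 < t" using a by simp
        then have "dmax f t = ennreal (a / t)" using dm[of t] True by simp
        then have "enn_powr (dmax f t) 2 * ennreal (Wprim w t powr (2 - 1) * w t) = ennreal ((a / t)\<^sup>2) * ennreal (Wprim w t * w t)"
          using a t0 W_nonneg[OF wt, of t] by (simp add: enn_powr_ennreal)
        also have "\<dots> = ennreal ((a / t)\<^sup>2 * (Wprim w t * w t))" by (simp add: ennreal_mult')
        also have "(a / t)\<^sup>2 * (Wprim w t * w t) = (a\<^sup>2 * Wprim w t / t\<^sup>2) * w t"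
          by (simp add: power_divide)
        finally show ?thesis using True t0 by simp
      qed simp
    qed
    also have "\<dots> \<le> ennreal (C'\<^sup>2) * (ennreal (1 / c) * ennreal (Wprim w a powr 2))"
      using Iw_bd Iu_bd by (meson mult_left_mono order_trans zero_le)
    also have "\<dots> = ennreal (K * (Wprim w a)\<^sup>2)"
      using c W_nonneg[OF wt, of a] by (simp add: K_def ennreal_mult'[symmetric])
    finally show "(\<integral>\<^sup>+ t. ennreal ((a\<^sup>2 * Wprim w t / t\<^sup>2) * w t) * indicator {a<..} t \<partial>lborel) \<le> ennreal (K * (Wprim w a)\<^sup>2)" .
  qed
qed


lemma gamma_fwd:
  "Gamma_spaces_eq TYPE('a::euclidean_space) w q (\<lambda>t. Wprim w t powr (q - 1) * w t)"
  unfolding Gamma_spaces_eq_def Gamma1q_def Gammaq_def Gamma1q_norm_def Gammaq_norm_def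
  by (intro conjI exI[of _ 1]) auto

theorem proposition3p5:
  fixes w :: "real \<Rightarrow> real"
  assumes "decreasing_weight w"
  shows "B1 w \<longleftrightarrow>
    (\<forall>q::real. 1 < q \<longrightarrow> (\<exists>wq. weight wq \<and> level_equiv w q wq \<and>
        Gamma_spaces_eq TYPE('a::euclidean_space) w q wq))"
proof
  assume b: "B1 w"
  show "\<forall>q::real. 1 < q \<longrightarrow> (\<exists>wq. weight wq \<and> level_equiv w q wq \<and>
        Gamma_spaces_eq TYPE('a::euclidean_space) w q wq)"
  proof (intro allI impI)
    fix q :: real assume q: "1 < q"
    show "\<exists>wq. weight wq \<and> level_equiv w q wq \<and> Gamma_spaces_eq TYPE('a::euclidean_space) w q wq"
      by (intro exI[of _ "\<lambda>t. Wprim w t powr (q - 1) * w t"] conjI wq_weight[OF assms q]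
          level_fwd[OF assms b q] gamma_fwd)
  qed
next
  assume h: "\<forall>q::real. 1 < q \<longrightarrow> (\<exists>wq. weight wq \<and> level_equiv w q wq \<and>
        Gamma_spaces_eq TYPE('a::euclidean_space) w q wq)"
  then obtain wq where ut: "weight wq" and lev: "level_equiv w 2 wq"
    and G: "Gamma_spaces_eq TYPE('a::euclidean_space) w 2 wq"
    by (metis one_less_numeral_iff semiring_norm(76))
  show "B1 w" by (rule converse[OF assms ut lev G])
qed

end
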